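(* Let $y \in L^2_{\mathbb{C}}(0,2)$ and suppose $x \in L^2_{\mathbb{C}}(0,1)$ satisfies $$\int_0^s x(s-q)\,x(q)\,dq = y(s) \quad \text{for almost all } s\in[0,2]$$ (with the convention that $x$ is extended by zero outside $[0,1]$). Then the set of all solutions $z\in L^2_{\mathbb{C}}(0,1)$ of this equation (i.e. $\int_0^s z(s-q)z(q)\,dq = y(s)$ for almost all $s\in[0,2]$) is exactly $\{x,-x\}$, where functions are identified if they agree almost everywhere.
   Context: $L^2_{\mathbb{C}}(0,a)$ denotes the Hilbert space of square-integrable complex-valued functions on $(0,a)$ with norm $\|z\|=\left(\int_0^a|z(q)|^2dq\right)^{1/2}$. Functions on $[0,1]$ are extended by zero to all of $\mathbb{R}$, so that for $1<s\le 2$ the integral $\int_0^s x(s-q)x(q)\,dq$ effectively runs over $q\in[s-1,1]$. This is the autoconvolution equation with constant kernel $k\equiv 1$. *)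

theory Defs
  imports "HOL-Analysis.Analysis"
begin

definition L2C :: "real \<Rightarrow> (real \<Rightarrow> complex) \<Rightarrow> bool" where
  "L2C a f \<longleftrightarrow> set_borel_measurable lborel {0<..<a} f \<and>
     set_integrable lborel {0<..<a} (\<lambda>q. (cmod (f q))^2)"

definition ext01 :: "(real \<Rightarrow> complex) \<Rightarrow> real \<Rightarrow> complex" where
  "ext01 f q = (if q \<in> {0..1} then f q else 0)"

definition autoconv :: "(real \<Rightarrow> complex) \<Rightarrow> real \<Rightarrow> complex" where
  "autoconv f s = (LINT q:{0..s}|lborel. ext01 f (s - q) * ext01 f q)"

definition solves_autoconv :: "(real \<Rightarrow> complex) \<Rightarrow> (real \<Rightarrow> complex) \<Rightarrow> bool" where
  "solves_autoconv y z \<longleftrightarrow> (AE s in lborel. s \<in> {0..2} \<longrightarrow> autoconv z s = y s)"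

end

theory Submission
  imports Defs "HOL-Analysis.Radon_Nikodym"
begin


lemma AE_zero_if_lessThan_integrals:
  fixes f :: "real \<Rightarrow> real"
  assumes int: "integrable lborel f"
    and I: "\<And>a. (\<integral>t. indicator {a<..} t * f t \<partial>lborel) = 0"
  shows "AE t in lborel. f t = 0"
proof -
  have fm[measurable]: "f \<in> borel_measurable lborel" using int by auto
  have fb[measurable]: "f \<in> borel_measurable borel" using fm by simp
  have key: "emeasure (density lborel (\<lambda>t. ennreal (g t))) {a<..} = ennreal (\<integral>t. max 0 (g t) * indicator {a<..} t \<partial>lborel)"
    if gi: "integrable lborel g" for g :: "real \<Rightarrow> real" and a
  proof -
    have [measurable]: "g \<in> borel_measurable borel" using gi by auto
    have "emeasure (density lborel (\<lambda>t. ennreal (g t))) {a<..} = (\<integral>\<^sup>+ t. ennreal (g t) * indicator {a<..} t \<partial>lborel)"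
      by (rule emeasure_density) auto
    also have "\<dots> = (\<integral>\<^sup>+ t. ennreal (max 0 (g t) * indicator {a<..} t) \<partial>lborel)"
      by (intro nn_integral_cong) (auto simp: indicator_def max_def ennreal_neg)
    also have "\<dots> = ennreal (\<integral>t. max 0 (g t) * indicator {a<..} t \<partial>lborel)"
    proof (rule nn_integral_eq_integral)
      show "integrable lborel (\<lambda>t. max 0 (g t) * indicator {a<..} t)"
        by (rule Bochner_Integration.integrable_bound[OF integrable_norm[OF gi]]) (auto simp: indicator_def)
    qed auto
    finally show ?thesis .
  qed
  have mi: "integrable lborel (\<lambda>t. - f t)" using int by auto
  have "density lborel (\<lambda>t. ennreal (f t)) = density lborel (\<lambda>t. ennreal (- f t))"
  proof (rule measure_eqI_lessThan)
    fix a :: real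
    show "emeasure (density lborel (\<lambda>t. ennreal (f t))) {a<..} < \<infinity>"
      using key[OF int] by simp
    have i1: "integrable lborel (\<lambda>t. max 0 (f t) * indicator {a<..} t)"
        by (rule Bochner_Integration.integrable_bound[OF integrable_norm[OF int]]) (auto simp: indicator_def)
    have i2: "integrable lborel (\<lambda>t. max 0 (- f t) * indicator {a<..} t)"
        by (rule Bochner_Integration.integrable_bound[OF integrable_norm[OF int]]) (auto simp: indicator_def)
    have "(\<integral>t. indicator {a<..} t * f t \<partial>lborel) = (\<integral>t. max 0 (f t) * indicator {a<..} t - max 0 (- f t) * indicator {a<..} t \<partial>lborel)"
      by (intro Bochner_Integration.integral_cong) (auto simp: indicator_def max_def)
    also have "\<dots> = (\<integral>t. max 0 (f t) * indicator {a<..} t \<partial>lborel) - (\<integral>t. max 0 (- f t) * indicator {a<..} t \<partial>lborel)"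
      using i1 i2 by (rule Bochner_Integration.integral_diff)
    finally have "(\<integral>t. max 0 (f t) * indicator {a<..} t \<partial>lborel) = (\<integral>t. max 0 (- f t) * indicator {a<..} t \<partial>lborel)"
      using I[of a] by simp
    then show "emeasure (density lborel (\<lambda>t. ennreal (f t))) {a<..} = emeasure (density lborel (\<lambda>t. ennreal (- f t))) {a<..}"
      using key[OF int, of a] key[OF mi, of a] by simp
  qed auto
  then have "AE t in lborel. ennreal (f t) = ennreal (- f t)"
    by (intro sigma_finite_measure.density_unique[OF sigma_finite_lborel]) auto
  then show ?thesis
  proof eventually_elim
    case (elim t)
    then show ?case
      by (cases "f t > 0"; cases "f t < 0") (auto simp: ennreal_neg)
  qed
qed

lemma weier_poly:
  fixes g :: "real \<Rightarrow> real"
  assumes "continuous_on {0..1} g" "e > 0"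
  shows "\<exists>c n. \<forall>t\<in>{0..1}. \<bar>g t - (\<Sum>i\<le>n. c i * t^i)\<bar> < e"
proof -
  obtain p where p: "polynomial_function p" "\<forall>t\<in>{0..1}. norm (g t - p t) < e"
    using Stone_Weierstrass_polynomial_function[OF compact_Icc assms] by blast
  then have "real_polynomial_function p" by (simp add: real_polynomial_function_eq)
  then obtain c n where "p = (\<lambda>x. \<Sum>i\<le>n. c i * x^i)"
    using real_polynomial_function_iff_sum by blast
  then show ?thesis using p(2) by auto
qed

lemma mom_integrable:
  fixes f :: "real \<Rightarrow> 'a::{banach, second_countable_topology}"
  assumes int: "integrable lborel f" and supp: "\<And>t. t \<notin> {0..1} \<Longrightarrow> f t = 0"
  shows "integrable lborel (\<lambda>t. (t^k) *\<^sub>R f t)"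
proof (rule Bochner_Integration.integrable_bound[OF integrable_norm[OF int]])
  show "(\<lambda>t. (t^k) *\<^sub>R f t) \<in> borel_measurable lborel" using int by auto
  show "AE t in lborel. norm ((t^k) *\<^sub>R f t) \<le> norm (norm (f t))"
  proof (rule AE_I2)
    fix t :: real
    show "norm ((t^k) *\<^sub>R f t) \<le> norm (norm (f t))"
    proof (cases "t \<in> {0..1}")
      case True
      then have "\<bar>t^k\<bar> \<le> 1" by (auto simp: power_le_one power_abs)
      then show ?thesis by (simp add: mult_left_le_one_le)
    next
      case False then show ?thesis using supp by simp
    qed
  qed
qed

lemma zero_moments_AE:
  fixes f :: "real \<Rightarrow> real"
  assumes int: "integrable lborel f" and supp: "\<And>t. t \<notin> {0..1} \<Longrightarrow> f t = 0"
    and mom: "\<And>k. (\<integral>t. t^k * f t \<partial>lborel) = 0"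
  shows "AE t in lborel. f t = 0"
proof (rule AE_zero_if_lessThan_integrals[OF int])
  have [measurable]: "f \<in> borel_measurable borel" using int by auto
  have mi: "\<And>k. integrable lborel (\<lambda>t. t^k * f t)"
    using mom_integrable[OF int supp] by simp
  have poly: "(\<integral>t. (\<Sum>i\<le>n. c i * t^i) * f t \<partial>lborel) = 0" for c n
  proof -
    have "(\<integral>t. (\<Sum>i\<le>n. c i * t^i) * f t \<partial>lborel) = (\<integral>t. (\<Sum>i\<le>n. c i * (t^i * f t)) \<partial>lborel)"
      by (intro Bochner_Integration.integral_cong) (auto simp: sum_distrib_right mult.assoc)
    also have "\<dots> = (\<Sum>i\<le>n. (\<integral>t. c i * (t^i * f t) \<partial>lborel))"
      by (rule Bochner_Integration.integral_sum) (use mi in auto)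
    also have "\<dots> = 0" using mom by simp
    finally show ?thesis .
  qed
  fix a :: real
  define \<phi> where "\<phi> k t = max 0 (min 1 ((t - a) * real (Suc k)))" for k t
  have "\<forall>k. \<exists>c n. \<forall>t\<in>{0..1}. \<bar>\<phi> k t - (\<Sum>i\<le>n. c i * t^i)\<bar> < inverse (real (Suc k))"
  proof
    fix k
    show "\<exists>c n. \<forall>t\<in>{0..1}. \<bar>\<phi> k t - (\<Sum>i\<le>n. c i * t^i)\<bar> < inverse (real (Suc k))"
      by (rule weier_poly) (auto simp: \<phi>_def intro!: continuous_intros)
  qed
  then obtain c n where cn: "\<And>k t. t \<in> {0..1} \<Longrightarrow> \<bar>\<phi> k t - (\<Sum>i\<le>n k. c k i * t^i)\<bar> < inverse (real (Suc k))"
    by metis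
  define p where "p k t = (\<Sum>i\<le>n k. c k i * t^i)" for k t
  have lim: "(\<lambda>k. \<integral>t. p k t * f t \<partial>lborel) \<longlonglongrightarrow> (\<integral>t. indicator {a<..} t * f t \<partial>lborel)"
  proof (rule integral_dominated_convergence[where w="\<lambda>t. 2 * norm (f t)"])
    show "(\<lambda>t. indicator {a<..} t * f t) \<in> borel_measurable lborel" by measurable
    show "\<And>k. (\<lambda>t. p k t * f t) \<in> borel_measurable lborel" unfolding p_def by measurable
    show "integrable lborel (\<lambda>t. 2 * norm (f t))" using int by auto
    show "\<And>k. AE t in lborel. norm (p k t * f t) \<le> 2 * norm (f t)"
    proof (rule AE_I2)
      fix k t
      show "norm (p k t * f t) \<le> 2 * norm (f t)"
      proof (cases "t \<in> {0..1}")
        case True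
        have "\<bar>p k t\<bar> \<le> 2"
        proof -
          have "\<bar>\<phi> k t\<bar> \<le> 1" by (simp add: \<phi>_def)
          moreover have "inverse (real (Suc k)) \<le> 1" by (simp add: inverse_le_1_iff)
          ultimately show ?thesis using cn[OF True, of k] unfolding p_def by linarith
        qed
        then show ?thesis by (simp add: abs_mult mult_right_mono)
      next
        case False then show ?thesis using supp by simp
      qed
    qed
    show "AE t in lborel. (\<lambda>k. p k t * f t) \<longlonglongrightarrow> indicator {a<..} t * f t"
    proof (rule AE_I2)
      fix t
      show "(\<lambda>k. p k t * f t) \<longlonglongrightarrow> indicator {a<..} t * f t"
      proof (cases "t \<in> {0..1}")
        case False then show ?thesis using supp by simp
      next
        case True
        have phil: "(\<lambda>k. \<phi> k t) \<longlonglongrightarrow> indicator {a<..} t"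
        proof (cases "t > a")
          case False
          then have "\<phi> k t = 0" for k
          proof -
            have "(t - a) * real (Suc k) \<le> 0" using False by (intro mult_nonpos_nonneg) auto
            then show ?thesis unfolding \<phi>_def by (simp add: min_def max_def)
          qed
          then show ?thesis using False by simp
        next
          case True
          obtain N :: nat where N: "inverse (t - a) < real N"
            using reals_Archimedean2 by blast
          have "\<phi> k t = 1" if "k \<ge> N" for k
          proof -
            have "1 < (t - a) * real N" using N True by (simp add: field_simps)
            also have "\<dots> \<le> (t - a) * real (Suc k)" using that True by (intro mult_left_mono) auto
            finally show ?thesis unfolding \<phi>_def by (simp add: min_def max_def)
          qed
          then have "eventually (\<lambda>k. \<phi> k t = indicator {a<..} t) sequentially"
            using True by (auto simp: eventually_sequentially)
          then show ?thesis by (rule tendsto_eventually)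
        qed
        have d: "(\<lambda>k. p k t - \<phi> k t) \<longlonglongrightarrow> 0"
        proof (rule Lim_null_comparison[OF _ LIMSEQ_inverse_real_of_nat])
          show "\<forall>\<^sub>F k in sequentially. norm (p k t - \<phi> k t) \<le> inverse (real (Suc k))"
            using cn[OF True] unfolding p_def by (auto intro!: always_eventually less_imp_le simp: abs_minus_commute)
        qed
        have "(\<lambda>k. \<phi> k t + (p k t - \<phi> k t)) \<longlonglongrightarrow> indicator {a<..} t + 0"
          by (intro tendsto_add phil d)
        then have "(\<lambda>k. p k t) \<longlonglongrightarrow> indicator {a<..} t" by simp
        then show ?thesis by (intro tendsto_mult tendsto_const)
      qed
    qed
  qed
  moreover have "(\<lambda>k. \<integral>t. p k t * f t \<partial>lborel) = (\<lambda>k. 0)" unfolding p_def by (rule ext, rule poly)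
  ultimately have "(\<lambda>k. 0::real) \<longlonglongrightarrow> (\<integral>t. indicator {a<..} t * f t \<partial>lborel)" by simp
  then show "(\<integral>t. indicator {a<..} t * f t \<partial>lborel) = 0"
    using LIMSEQ_unique[OF _ tendsto_const] by metis
qed




definition mom :: "nat \<Rightarrow> (real \<Rightarrow> complex) \<Rightarrow> complex" where
  "mom k F = (\<integral>t. of_real (t^k) * F t \<partial>lborel)"

definition conv :: "(real \<Rightarrow> complex) \<Rightarrow> (real \<Rightarrow> complex) \<Rightarrow> real \<Rightarrow> complex" where
  "conv F G s = (\<integral>q. F (s - q) * G q \<partial>lborel)"

lemma mom_integrable_c:
  fixes F :: "real \<Rightarrow> complex"
  assumes int: "integrable lborel F" and supp: "\<And>t. t \<notin> {0..1} \<Longrightarrow> F t = 0"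
  shows "integrable lborel (\<lambda>t. of_real (t^k) * F t)"
  using mom_integrable[OF int supp, of k] by (simp add: scaleR_conv_of_real)

lemma zero_moments_AE_complex:
  fixes F :: "real \<Rightarrow> complex"
  assumes int: "integrable lborel F" and supp: "\<And>t. t \<notin> {0..1} \<Longrightarrow> F t = 0"
    and mom: "\<And>k. mom k F = 0"
  shows "AE t in lborel. F t = 0"
proof -
  have mi: "\<And>k. integrable lborel (\<lambda>t. of_real (t^k) * F t)" by (rule mom_integrable_c[OF int supp])
  have "AE t in lborel. Re (F t) = 0"
  proof (rule zero_moments_AE)
    show "integrable lborel (\<lambda>t. Re (F t))" using int by auto
    show "\<And>t. t \<notin> {0..1} \<Longrightarrow> Re (F t) = 0" using supp by simp
    fix k
    have "(\<integral>t. t^k * Re (F t) \<partial>lborel) = (\<integral>t. Re (of_real (t^k) * F t) \<partial>lborel)" by simp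
    also have "\<dots> = Re (mom k F)" unfolding mom_def by (rule integral_Re[OF mi])
    finally show "(\<integral>t. t^k * Re (F t) \<partial>lborel) = 0" using mom by simp
  qed
  moreover have "AE t in lborel. Im (F t) = 0"
  proof (rule zero_moments_AE)
    show "integrable lborel (\<lambda>t. Im (F t))" using int by auto
    show "\<And>t. t \<notin> {0..1} \<Longrightarrow> Im (F t) = 0" using supp by simp
    fix k
    have "(\<integral>t. t^k * Im (F t) \<partial>lborel) = (\<integral>t. Im (of_real (t^k) * F t) \<partial>lborel)" by simp
    also have "\<dots> = Im (mom k F)" unfolding mom_def by (rule integral_Im[OF mi])
    finally show "(\<integral>t. t^k * Im (F t) \<partial>lborel) = 0" using mom by simp
  qed
  ultimately show ?thesis by eventually_elim (simp add: complex_eq_iff)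
qed

lemma conv_moment:
  fixes F G :: "real \<Rightarrow> complex"
  assumes iF: "integrable lborel F" and sF: "\<And>t. t \<notin> {0..1} \<Longrightarrow> F t = 0"
    and iG: "integrable lborel G" and sG: "\<And>t. t \<notin> {0..1} \<Longrightarrow> G t = 0"
  shows "(\<integral>s. of_real (s^n) * conv F G s \<partial>lborel) = (\<Sum>k\<le>n. of_nat (n choose k) * mom (n-k) F * mom k G)"
proof -
  have [measurable]: "F \<in> borel_measurable borel" "G \<in> borel_measurable borel" using iF iG by auto
  have shift_int: "integrable lborel (\<lambda>s. F (s - q))" for q
    using lborel_integrable_real_affine[OF iF, of 1 "-q"] by simp
  have shift_norm: "(\<integral>s. norm (F (s - q)) \<partial>lborel) = (\<integral>x. norm (F x) \<partial>lborel)" for q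
    using lborel_integral_real_affine[of 1 "\<lambda>x. norm (F x)" "-q"] by simp
  have int_qs: "integrable (lborel \<Otimes>\<^sub>M lborel) (\<lambda>(q,s). F (s - q) * G q)"
  proof (rule lborel_pair.Fubini_integrable)
    show "(\<lambda>(q,s). F (s - q) * G q) \<in> borel_measurable (lborel \<Otimes>\<^sub>M lborel)" by measurable
    have "(\<lambda>q. \<integral>s. norm (F (s - q) * G q) \<partial>lborel) = (\<lambda>q. norm (G q) * (\<integral>x. norm (F x) \<partial>lborel))"
    proof
      fix q
      have "(\<integral>s. norm (F (s - q) * G q) \<partial>lborel) = (\<integral>s. norm (F (s - q)) * norm (G q) \<partial>lborel)"
        by (simp add: norm_mult)
      also have "\<dots> = (\<integral>s. norm (F (s - q)) \<partial>lborel) * norm (G q)" by simp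
      finally show "(\<integral>s. norm (F (s - q) * G q) \<partial>lborel) = norm (G q) * (\<integral>x. norm (F x) \<partial>lborel)"
        using shift_norm[of q] by simp
    qed
    then show "integrable lborel (\<lambda>q. \<integral>s. norm (case (q, s) of (q, s) \<Rightarrow> F (s - q) * G q) \<partial>lborel)"
      using iG by simp
    show "AE q in lborel. integrable lborel (\<lambda>s. case (q, s) of (q, s) \<Rightarrow> F (s - q) * G q)"
      using shift_int by (auto intro!: integrable_mult_left)
  qed
  define h where "h s q = of_real (s^n) * (F (s - q) * G q)" for s q
  have int_h: "integrable (lborel \<Otimes>\<^sub>M lborel) (case_prod h)"
  proof -
    have "integrable (lborel \<Otimes>\<^sub>M lborel) (\<lambda>(s,q). F (s - q) * G q)"
      using lborel_pair.integrable_product_swap[OF int_qs] by (simp add: case_prod_beta)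
    then have i2: "integrable (lborel \<Otimes>\<^sub>M lborel) (\<lambda>p. 2^n * norm ((\<lambda>(s,q). F (s - q) * G q) p))"
      by auto
    show ?thesis
    proof (rule Bochner_Integration.integrable_bound[OF i2])
      show "case_prod h \<in> borel_measurable (lborel \<Otimes>\<^sub>M lborel)" unfolding h_def by measurable
      show "AE p in lborel \<Otimes>\<^sub>M lborel. norm (case_prod h p) \<le> norm (2^n * norm ((\<lambda>(s,q). F (s - q) * G q) p))"
      proof (rule AE_I2, clarify)
        fix s q
        show "norm (h s q) \<le> norm (2^n * norm (F (s - q) * G q))"
        proof (cases "s - q \<in> {0..1} \<and> q \<in> {0..1}")
          case True
          then have "\<bar>s\<bar> \<le> 2" by auto
          then have "\<bar>s\<bar>^n \<le> 2^n" by (intro power_mono) auto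
          then show ?thesis unfolding h_def by (simp add: norm_mult norm_power mult_right_mono)
        next
          case False then show ?thesis using sF sG unfolding h_def by auto
        qed
      qed
    qed
  qed
  have inner: "(\<integral>s. h s q \<partial>lborel) = (\<Sum>k\<le>n. of_nat (n choose k) * mom (n-k) F * (of_real (q^k) * G q))" for q
  proof -
    have "(\<integral>s. h s q \<partial>lborel) = (\<integral>x. h (q + 1 * x) q \<partial>lborel)"
      using lborel_integral_real_affine[of 1 "\<lambda>s. h s q" q] by simp
    also have "\<dots> = (\<integral>x. (\<Sum>k\<le>n. (of_nat (n choose k) * (of_real (q^k) * G q)) * (of_real (x^(n-k)) * F x)) \<partial>lborel)"
    proof (rule Bochner_Integration.integral_cong[OF refl])
      fix x
      have "of_real ((q + x)^n) = (of_real q + of_real x :: complex)^n" by simp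
      also have "\<dots> = (\<Sum>k\<le>n. of_nat (n choose k) * of_real q ^ k * of_real x ^ (n - k))"
        by (rule binomial_ring)
      finally show "h (q + 1 * x) q = (\<Sum>k\<le>n. (of_nat (n choose k) * (of_real (q^k) * G q)) * (of_real (x^(n-k)) * F x))"
        unfolding h_def by (simp add: sum_distrib_left sum_distrib_right mult_ac)
    qed
    also have "\<dots> = (\<Sum>k\<le>n. (\<integral>x. (of_nat (n choose k) * (of_real (q^k) * G q)) * (of_real (x^(n-k)) * F x) \<partial>lborel))"
      by (rule Bochner_Integration.integral_sum) (use mom_integrable_c[OF iF sF] in auto)
    also have "\<dots> = (\<Sum>k\<le>n. of_nat (n choose k) * mom (n-k) F * (of_real (q^k) * G q))"
      unfolding mom_def by (simp only: integral_mult_right_zero) (simp add: mult_ac)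
    finally show ?thesis .
  qed
  have "(\<integral>s. of_real (s^n) * conv F G s \<partial>lborel) = (\<integral>s. (\<integral>q. h s q \<partial>lborel) \<partial>lborel)"
    unfolding conv_def h_def by simp
  also have "\<dots> = (\<integral>q. (\<integral>s. h s q \<partial>lborel) \<partial>lborel)"
    using lborel_pair.Fubini_integral[OF int_h] by simp
  also have "\<dots> = (\<integral>q. (\<Sum>k\<le>n. of_nat (n choose k) * mom (n-k) F * (of_real (q^k) * G q)) \<partial>lborel)"
    by (simp add: inner)
  also have "\<dots> = (\<Sum>k\<le>n. (\<integral>q. of_nat (n choose k) * mom (n-k) F * (of_real (q^k) * G q) \<partial>lborel))"
    by (rule Bochner_Integration.integral_sum) (use mom_integrable_c[OF iG sG] in auto)
  also have "\<dots> = (\<Sum>k\<le>n. of_nat (n choose k) * mom (n-k) F * mom k G)"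
    unfolding mom_def by simp
  finally show ?thesis .
qed




lemma sum_rev_atMost: "(\<Sum>k\<le>n. g k (n - k)) = (\<Sum>k\<le>(n::nat). g (n - k) k)"
  by (rule sum.reindex_bij_witness[where i="\<lambda>k. n - k" and j="\<lambda>k. n - k"]) auto

lemma cauchy_zero:
  fixes d e :: "nat \<Rightarrow> complex"
  assumes S: "\<And>n. (\<Sum>k\<le>n. of_nat (n choose k) * d (n-k) * e k) = 0"
  shows "(\<forall>k. d k = 0) \<or> (\<forall>k. e k = 0)"
proof (rule ccontr)
  assume "\<not> ?thesis"
  then obtain p0 r0 where "d p0 \<noteq> 0" "e r0 \<noteq> 0" by auto
  define p where "p = (LEAST k. d k \<noteq> 0)"
  define r where "r = (LEAST k. e k \<noteq> 0)"
  have dp: "d p \<noteq> 0" unfolding p_def by (rule LeastI) fact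
  have er: "e r \<noteq> 0" unfolding r_def by (rule LeastI) fact
  have dl: "k < p \<Longrightarrow> d k = 0" for k unfolding p_def using not_less_Least by blast
  have el: "k < r \<Longrightarrow> e k = 0" for k unfolding r_def using not_less_Least by blast
  define n where "n = p + r"
  have "(\<Sum>k\<le>n. of_nat (n choose k) * d (n-k) * e k) = of_nat (n choose r) * d (n-r) * e r"
  proof -
    have rn: "r \<in> {..n}" unfolding n_def by simp
    have "(\<Sum>k\<in>{..n} - {r}. of_nat (n choose k) * d (n-k) * e k) = 0"
    proof (rule sum.neutral, intro ballI)
      fix k assume k: "k \<in> {..n} - {r}"
      show "of_nat (n choose k) * d (n-k) * e k = 0"
      proof (cases "k < r")
        case True then show ?thesis using el by simp
      next
        case False
        then have "n - k < p" using k unfolding n_def by auto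
        then show ?thesis using dl by simp
      qed
    qed
    then show ?thesis using sum.remove[OF _ rn, of "\<lambda>k. of_nat (n choose k) * d (n-k) * e k"] by simp
  qed
  moreover have "of_nat (n choose r) * d (n-r) * e r \<noteq> 0"
    using dp er unfolding n_def by simp
  ultimately show False using S[of n] by simp
qed

lemma sign_lemma:
  fixes a c :: "nat \<Rightarrow> complex"
  assumes eq: "\<And>n. (\<Sum>k\<le>n. of_nat (n choose k) * a (n-k) * a k) = (\<Sum>k\<le>n. of_nat (n choose k) * c (n-k) * c k)"
  shows "(\<forall>k. a k = c k) \<or> (\<forall>k. a k = - c k)"
proof -
  have "(\<Sum>k\<le>n. of_nat (n choose k) * (a (n-k) - c (n-k)) * (a k + c k)) = 0" for n
  proof -
    have sym: "(\<Sum>k\<le>n. of_nat (n choose k) * c (n-k) * a k) = (\<Sum>k\<le>n. of_nat (n choose k) * a (n-k) * c k)"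
    proof -
      have "(\<Sum>k\<le>n. of_nat (n choose k) * c (n-k) * a k) = (\<Sum>k\<le>n. of_nat (n choose (n - k)) * c (n-k) * a (n - (n - k)))"
        by (intro sum.cong refl) (simp add: binomial_symmetric[symmetric])
      also have "\<dots> = (\<Sum>k\<le>n. of_nat (n choose k) * c k * a (n - k))"
        using sum_rev_atMost[of "\<lambda>u v. of_nat (n choose v) * c v * a (n - v)" n] by simp
      finally show ?thesis by (simp add: mult_ac)
    qed
    have "(\<Sum>k\<le>n. of_nat (n choose k) * (a (n-k) - c (n-k)) * (a k + c k)) =
      (\<Sum>k\<le>n. of_nat (n choose k) * a (n-k) * a k) - (\<Sum>k\<le>n. of_nat (n choose k) * c (n-k) * c k)
      + ((\<Sum>k\<le>n. of_nat (n choose k) * a (n-k) * c k) - (\<Sum>k\<le>n. of_nat (n choose k) * c (n-k) * a k))"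
      by (simp add: sum_subtractf[symmetric] sum.distrib[symmetric] algebra_simps)
    also have "\<dots> = 0" using eq[of n] sym by simp
    finally show ?thesis .
  qed
  then have "(\<forall>k. a k - c k = 0) \<or> (\<forall>k. a k + c k = 0)"
    by (intro cauchy_zero[where d="\<lambda>k. a k - c k" and e="\<lambda>k. a k + c k"]) simp
  then show ?thesis by (auto simp: eq_neg_iff_add_eq_0)
qed




lemma ext01_measurable:
  assumes "L2C 1 f"
  shows "ext01 f \<in> borel_measurable borel"
proof -
  have m: "(\<lambda>q. indicator {0<..<1} q *\<^sub>R f q) \<in> borel_measurable lborel"
    using assms unfolding L2C_def set_borel_measurable_def by simp
  have e: "ext01 f = (\<lambda>q. indicator {0<..<1} q *\<^sub>R f q + indicator {0} q *\<^sub>R f 0 + indicator {1} q *\<^sub>R f 1)"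
    by (auto simp: ext01_def indicator_def fun_eq_iff)
  show ?thesis unfolding e using m by simp
qed

lemma ext01_integrable:
  assumes "L2C 1 f"
  shows "integrable lborel (ext01 f)"
proof -
  have [measurable]: "ext01 f \<in> borel_measurable borel" by (rule ext01_measurable[OF assms])
  have i1: "integrable lborel (\<lambda>q. indicator {0<..<1} q *\<^sub>R (cmod (f q))^2)"
    using assms unfolding L2C_def set_integrable_def by simp
  have i2: "integrable lborel (\<lambda>q. indicator {0..1::real} q :: real)"
    by (rule integrable_real_indicator) auto
  define w where "w q = indicator {0<..<1} q *\<^sub>R (cmod (f q))^2 + indicator {0..1::real} q * (1 + cmod (f 0) + cmod (f 1))" for q
  have iw: "integrable lborel w" unfolding w_def using i1 i2 by auto
  show ?thesis
  proof (rule Bochner_Integration.integrable_bound[OF iw])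
    show "ext01 f \<in> borel_measurable lborel" by simp
    show "AE q in lborel. norm (ext01 f q) \<le> norm (w q)"
    proof (rule AE_I2)
      fix q :: real
      have "norm (ext01 f q) \<le> w q"
      proof (cases "q \<in> {0<..<1}")
        case True
        have "cmod (f q) \<le> (cmod (f q))^2 + 1"
        proof -
          have "0 \<le> (cmod (f q) - 1)^2" by simp
          then have "2 * cmod (f q) \<le> (cmod (f q))^2 + 1" by (simp add: power2_eq_square algebra_simps)
          then show ?thesis using norm_ge_zero[of "f q"] by linarith
        qed
        moreover have "0 \<le> cmod (f 0)" "0 \<le> cmod (f 1)" by auto
        moreover have "w q = (cmod (f q))^2 + (1 + cmod (f 0) + cmod (f 1))" using True unfolding w_def by simp
        moreover have "norm (ext01 f q) = cmod (f q)" using True unfolding ext01_def by simp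
        ultimately show ?thesis by linarith
      next
        case False
        then have "q \<notin> {0..1} \<or> q = 0 \<or> q = 1" by auto
        then show ?thesis unfolding w_def ext01_def using False by auto
      qed
      then show "norm (ext01 f q) \<le> norm (w q)" by simp
    qed
  qed
qed

lemma ext01_supp: "t \<notin> {0..1} \<Longrightarrow> ext01 f t = 0"
  unfolding ext01_def by auto

lemma autoconv_conv: "autoconv f s = conv (ext01 f) (ext01 f) s"
proof -
  have "autoconv f s = (\<integral>q. indicator {0..s} q *\<^sub>R (ext01 f (s - q) * ext01 f q) \<partial>lborel)"
    unfolding autoconv_def set_lebesgue_integral_def by simp
  also have "\<dots> = conv (ext01 f) (ext01 f) s"
    unfolding conv_def by (intro Bochner_Integration.integral_cong) (auto simp: ext01_def indicator_def)
  finally show ?thesis .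
qed

lemma conv_outside: "s \<notin> {0..2} \<Longrightarrow> conv (ext01 f) (ext01 g) s = 0"
  unfolding conv_def by (subst Bochner_Integration.integral_cong[where g="\<lambda>_. 0"]) (auto simp: ext01_def)

lemma conv_measurable:
  assumes [measurable]: "F \<in> borel_measurable borel" "G \<in> borel_measurable borel"
  shows "conv F G \<in> borel_measurable lborel"
  unfolding conv_def by (rule lborel.borel_measurable_lebesgue_integral) measurable




lemma uniq:
  assumes Lx: "L2C 1 x" and Lz: "L2C 1 z" and ae: "AE s in lborel. autoconv z s = autoconv x s"
  shows "(AE q in lborel. q \<in> {0<..<1} \<longrightarrow> z q = x q) \<or> (AE q in lborel. q \<in> {0<..<1} \<longrightarrow> z q = - x q)"
proof -
  define X where "X = ext01 x"
  define Z where "Z = ext01 z"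
  have iX: "integrable lborel X" and iZ: "integrable lborel Z"
    unfolding X_def Z_def using ext01_integrable Lx Lz by auto
  have mX[measurable]: "X \<in> borel_measurable borel" and mZ[measurable]: "Z \<in> borel_measurable borel"
    unfolding X_def Z_def using ext01_measurable Lx Lz by auto
  have sX: "\<And>t. t \<notin> {0..1} \<Longrightarrow> X t = 0" and sZ: "\<And>t. t \<notin> {0..1} \<Longrightarrow> Z t = 0"
    unfolding X_def Z_def by (auto simp: ext01_supp)
  have ae': "AE s in lborel. of_real (s^n) * conv Z Z s = of_real (s^n) * conv X X s" for n
    using ae by eventually_elim (simp add: autoconv_conv X_def Z_def)
  have eqm: "(\<Sum>k\<le>n. of_nat (n choose k) * mom (n-k) X * mom k X) = (\<Sum>k\<le>n. of_nat (n choose k) * mom (n-k) Z * mom k Z)" for n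
  proof -
    have cX[measurable]: "conv X X \<in> borel_measurable lborel" by (rule conv_measurable) auto
    have cZ[measurable]: "conv Z Z \<in> borel_measurable lborel" by (rule conv_measurable) auto
    have "(\<integral>s. of_real (s^n) * conv Z Z s \<partial>lborel) = (\<integral>s. of_real (s^n) * conv X X s \<partial>lborel)"
      by (rule integral_cong_AE[OF _ _ ae']) auto
    then show ?thesis using conv_moment[OF iX sX iX sX, of n] conv_moment[OF iZ sZ iZ sZ, of n] by simp
  qed
  have mXi: "\<And>k. integrable lborel (\<lambda>t. of_real (t^k) * X t)" by (rule mom_integrable_c[OF iX sX])
  have mZi: "\<And>k. integrable lborel (\<lambda>t. of_real (t^k) * Z t)" by (rule mom_integrable_c[OF iZ sZ])
  from sign_lemma[of "\<lambda>k. mom k X" "\<lambda>k. mom k Z", OF eqm]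
  show ?thesis
  proof
    assume h: "\<forall>k. mom k X = mom k Z"
    have "AE t in lborel. X t - Z t = 0"
    proof (rule zero_moments_AE_complex)
      show "integrable lborel (\<lambda>t. X t - Z t)" using iX iZ by auto
      show "\<And>t. t \<notin> {0..1} \<Longrightarrow> X t - Z t = 0" using sX sZ by simp
      fix k
      have "mom k (\<lambda>t. X t - Z t) = (\<integral>t. of_real (t^k) * X t - of_real (t^k) * Z t \<partial>lborel)"
        unfolding mom_def by (simp add: algebra_simps)
      also have "\<dots> = mom k X - mom k Z" unfolding mom_def
        by (rule Bochner_Integration.integral_diff[OF mXi mZi])
      finally show "mom k (\<lambda>t. X t - Z t) = 0" using h by simp
    qed
    then have "AE q in lborel. q \<in> {0<..<1} \<longrightarrow> z q = x q"
      by eventually_elim (auto simp: X_def Z_def ext01_def)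
    then show ?thesis ..
  next
    assume h: "\<forall>k. mom k X = - mom k Z"
    have "AE t in lborel. X t + Z t = 0"
    proof (rule zero_moments_AE_complex)
      show "integrable lborel (\<lambda>t. X t + Z t)" using iX iZ by auto
      show "\<And>t. t \<notin> {0..1} \<Longrightarrow> X t + Z t = 0" using sX sZ by simp
      fix k
      have "mom k (\<lambda>t. X t + Z t) = (\<integral>t. of_real (t^k) * X t + of_real (t^k) * Z t \<partial>lborel)"
        unfolding mom_def by (simp add: algebra_simps)
      also have "\<dots> = mom k X + mom k Z" unfolding mom_def
        by (rule Bochner_Integration.integral_add[OF mXi mZi])
      finally show "mom k (\<lambda>t. X t + Z t) = 0" using h by simp
    qed
    then have "AE q in lborel. q \<in> {0<..<1} \<longrightarrow> z q = - x q"
      by eventually_elim (auto simp: X_def Z_def ext01_def eq_neg_iff_add_eq_0 add.commute)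
    then show ?thesis ..
  qed
qed

lemma transfer:
  assumes Lx: "L2C 1 x" and Lz: "L2C 1 z" and sg: "\<sigma> * \<sigma> = (1::complex)"
    and ae: "AE q in lborel. q \<in> {0<..<1} \<longrightarrow> z q = \<sigma> * x q"
  shows "autoconv z s = autoconv x s"
proof -
  define X where "X = ext01 x"
  define Z where "Z = ext01 z"
  have mX[measurable]: "X \<in> borel_measurable borel" and mZ[measurable]: "Z \<in> borel_measurable borel"
    unfolding X_def Z_def using ext01_measurable Lx Lz by auto
  have ae1: "AE t in lborel. Z t = \<sigma> * X t"
    using ae AE_lborel_singleton[of 0] AE_lborel_singleton[of 1]
    by eventually_elim (auto simp: X_def Z_def ext01_def)
  have ae2: "AE q in lborel. Z (s + (-1) * q) = \<sigma> * X (s + (-1) * q)"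
    by (rule AE_borel_affine[OF _ _ ae1]) auto
  have "conv Z Z s = conv X X s"
  proof -
    have "(\<integral>q. Z (s - q) * Z q \<partial>lborel) = (\<integral>q. \<sigma> * \<sigma> * (X (s - q) * X q) \<partial>lborel)"
      by (rule integral_cong_AE) (use ae1 ae2 in \<open>auto elim!: eventually_elim2\<close>)
    then show ?thesis unfolding conv_def using sg by simp
  qed
  then show ?thesis by (simp add: autoconv_conv X_def Z_def)
qed

theorem theorem1:
  fixes x y :: "real \<Rightarrow> complex"
  assumes "L2C 2 y" and "L2C 1 x" and "solves_autoconv y x"
  shows "{z. L2C 1 z \<and> solves_autoconv y z} =
         {z. L2C 1 z \<and> ((AE q in lborel. q \<in> {0<..<1} \<longrightarrow> z q = x q) \<or>
                          (AE q in lborel. q \<in> {0<..<1} \<longrightarrow> z q = - x q))}"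
proof (intro set_eqI iffI)
  fix z assume zin: "z \<in> {z. L2C 1 z \<and> solves_autoconv y z}"
  then have Lz: "L2C 1 z" and sz: "solves_autoconv y z" by auto
  have "AE s in lborel. autoconv z s = autoconv x s"
    using sz assms(3) unfolding solves_autoconv_def
  proof eventually_elim
    case (elim s)
    then show ?case
      by (cases "s \<in> {0..2}") (auto simp: autoconv_conv conv_outside)
  qed
  then have "(AE q in lborel. q \<in> {0<..<1} \<longrightarrow> z q = x q) \<or>
                          (AE q in lborel. q \<in> {0<..<1} \<longrightarrow> z q = - x q)"
    using uniq[OF assms(2) Lz] by blast
  then show "z \<in> {z. L2C 1 z \<and> ((AE q in lborel. q \<in> {0<..<1} \<longrightarrow> z q = x q) \<or>
                          (AE q in lborel. q \<in> {0<..<1} \<longrightarrow> z q = - x q))}"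
    using Lz by simp
next
  fix z assume zin: "z \<in> {z. L2C 1 z \<and> ((AE q in lborel. q \<in> {0<..<1} \<longrightarrow> z q = x q) \<or>
                          (AE q in lborel. q \<in> {0<..<1} \<longrightarrow> z q = - x q))}"
  then have Lz: "L2C 1 z" and h: "(AE q in lborel. q \<in> {0<..<1} \<longrightarrow> z q = x q) \<or>
                          (AE q in lborel. q \<in> {0<..<1} \<longrightarrow> z q = - x q)" by auto
  have "autoconv z s = autoconv x s" for s
  proof (cases "AE q in lborel. q \<in> {0<..<1} \<longrightarrow> z q = x q")
    case True
    then show ?thesis by (intro transfer[OF assms(2) Lz, of 1]) auto
  next
    case False
    then have "AE q in lborel. q \<in> {0<..<1} \<longrightarrow> z q = - 1 * x q" using h by simp
    then show ?thesis by (intro transfer[OF assms(2) Lz, of "-1"]) auto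
  qed
  then show "z \<in> {z. L2C 1 z \<and> solves_autoconv y z}"
    using Lz assms(3) unfolding solves_autoconv_def by simp
qed


end
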